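(* Let $k\ge1$ and $d$ be integers with $k\mid d$, and set $m=d/k$. Let $X_{ij}\in\mathbb{R}^{1\times m}$ for $i=1,\dots,n$, $j=1,\dots,k$, let $w^*\in\mathbb{R}^m$, and suppose $X_{ij}w^*\neq0$ for all $i,j$. Let $y_i=\sum_{j=1}^k(X_{ij}w^* )_+$ and $r\in\mathbb{R}^m$. Consider the linear program $$\max_{w\in\mathbb{R}^m,\ z\in\mathbb{R}^{n\times k}}\ r^Tw\quad\text{s.t.}\quad z_{ij}\ge0,\ \ \sum_{j=1}^kz_{ij}=y_i\ (i=1,\dots,n),\ \ z_{ij}\ge X_{ij}w\ \ \forall (i,j).$$ For $i=1,\dots,n$ let $R_i=\{j\in\{1,\dots,k\}: X_{ij}w^*>0\}$. Then the feasible point $(w^*,z^* )$ with $z^*_{ij}=(X_{ij}w^* )_+$ is an optimal solution of this linear program if and only if $$r\in\operatorname{cone}\Big\{\textstyle\sum_{j\in R_i}X_{ij}^T:\ i=1,\dots,n\Big\},$$ equivalently, iff there exists $v\in\mathbb{R}^n$ with $v_{S_j}\ge0$ for all $j$ and $\sum_{j=1}^kX_{S_j,j}^Tv_{S_j}=r$, where $S_j=\{i: X_{ij}w^*>0\}$, $v_{S_j}$ is the subvector of $v$ indexed by $S_j$, and $X_{S_j,j}$ is the matrix with rows $X_{ij}$, $i\in S_j$.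
   Context: This models a one-hidden-layer convolutional network with a filter $w\in\mathbb{R}^{d/k}$ applied without overlap: $X_{ij}$ is the $j$-th length-$d/k$ block of the $i$-th data vector. $(u)_+=\max(u,0)$; $\operatorname{cone}(A)$ denotes the set of nonnegative linear combinations of vectors in $A$; an empty sum is the zero vector. *)

theory Defs
  imports "HOL-Analysis.Analysis"
begin

definition pos_part :: "real \<Rightarrow> real" where
  "pos_part u = max u 0"

definition nonneg_cone :: "('a::real_vector) set \<Rightarrow> 'a set" where
  "nonneg_cone A = {x. \<exists>F c. finite F \<and> F \<subseteq> A \<and> (\<forall>v\<in>F. c v \<ge> 0) \<and> x = (\<Sum>v\<in>F. c v *\<^sub>R v)}"

text \<open>Feasibility for the LP; data rows X i j (i<n, j<k), row-times-vector as inner product.\<close>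
definition lp_feasible ::
  "nat \<Rightarrow> nat \<Rightarrow> (nat \<Rightarrow> nat \<Rightarrow> real^'m) \<Rightarrow> (nat \<Rightarrow> real) \<Rightarrow> real^'m \<Rightarrow> (nat \<Rightarrow> nat \<Rightarrow> real) \<Rightarrow> bool"
  where
  "lp_feasible n k X y w z \<longleftrightarrow>
     (\<forall>i<n. \<forall>j<k. z i j \<ge> 0 \<and> z i j \<ge> X i j \<bullet> w) \<and> (\<forall>i<n. (\<Sum>j<k. z i j) = y i)"

definition lp_optimal ::
  "nat \<Rightarrow> nat \<Rightarrow> (nat \<Rightarrow> nat \<Rightarrow> real^'m) \<Rightarrow> (nat \<Rightarrow> real) \<Rightarrow> real^'m \<Rightarrow> real^'m \<Rightarrow> (nat \<Rightarrow> nat \<Rightarrow> real) \<Rightarrow> bool"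
  where
  "lp_optimal n k X y r w z \<longleftrightarrow> lp_feasible n k X y w z \<and>
     (\<forall>w' z'. lp_feasible n k X y w' z' \<longrightarrow> r \<bullet> w' \<le> r \<bullet> w)"

end

theory Submission
  imports Defs
begin

lemma perturb_exists:
  fixes s q :: "'i \<Rightarrow> real"
  assumes "finite I" "\<forall>x\<in>I. s x \<noteq> 0"
  shows "\<exists>t>0. \<forall>x\<in>I. (s x + t * q x > 0 \<longleftrightarrow> s x > 0)"
proof -
  have ev: "\<forall>\<^sub>F t in at_right 0. (s x + t * q x > 0 \<longleftrightarrow> s x > 0)" if "x \<in> I" for x
  proof -
    have "((\<lambda>t. s x + t * q x) \<longlongrightarrow> s x + 0 * q x) (at_right 0)"
      by (intro tendsto_add tendsto_const tendsto_mult tendsto_ident_at)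
    then have lim: "((\<lambda>t. s x + t * q x) \<longlongrightarrow> s x) (at_right 0)" by simp
    show ?thesis
    proof (cases "s x > 0")
      case True
      have "\<forall>\<^sub>F t in at_right 0. 0 < s x + t * q x" using order_tendstoD(1)[OF lim True] .
      then show ?thesis by (rule eventually_mono) (simp add: True)
    next
      case False
      then have neg: "s x < 0" using assms that by force
      have "\<forall>\<^sub>F t in at_right 0. s x + t * q x < 0" using order_tendstoD(2)[OF lim neg] .
      then show ?thesis by (rule eventually_mono) (simp add: False)
    qed
  qed
  have "\<forall>\<^sub>F t in at_right 0. \<forall>x\<in>I. (s x + t * q x > 0 \<longleftrightarrow> s x > 0)"
    by (rule eventually_ball_finite[OF assms(1)]) (use ev in blast)
  moreover have "\<forall>\<^sub>F t in at_right (0::real). t \<in> {0<..<1}"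
    by (rule eventually_at_right_real) simp
  ultimately have "\<forall>\<^sub>F t in at_right (0::real). t > 0 \<and> (\<forall>x\<in>I. (s x + t * q x > 0 \<longleftrightarrow> s x > 0))"
    by (rule eventually_elim2) simp
  from eventually_happens[OF this] show ?thesis
    using trivial_limit_at_right_real by simp
qed

lemma indexed_in_cone:
  fixes a :: "nat \<Rightarrow> 'a::real_vector"
  assumes "\<forall>i. c i \<ge> 0"
  shows "(\<Sum>i<n. c i *\<^sub>R a i) \<in> nonneg_cone (a ` {..<n})"
proof -
  have "(\<Sum>i<n. c i *\<^sub>R a i) = (\<Sum>v\<in>a ` {..<n}. \<Sum>i\<in>{i\<in>{..<n}. a i = v}. c i *\<^sub>R a i)"
    by (rule sum.image_gen) simp
  also have "\<dots> = (\<Sum>v\<in>a ` {..<n}. (\<Sum>i\<in>{i\<in>{..<n}. a i = v}. c i) *\<^sub>R v)"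
    by (rule sum.cong) (auto simp: scaleR_sum_left)
  finally show ?thesis unfolding nonneg_cone_def
    by (intro CollectI exI[of _ "a ` {..<n}"] exI[of _ "\<lambda>v. \<Sum>i\<in>{i\<in>{..<n}. a i = v}. c i"])
       (auto intro!: sum_nonneg simp: assms)
qed

lemma convex_cone_T:
  fixes a :: "nat \<Rightarrow> 'a::real_vector"
  shows "convex_cone {x. \<exists>c. (\<forall>i. c i \<ge> 0) \<and> x = (\<Sum>i<n. c i *\<^sub>R a i)}"
  unfolding convex_cone_def
proof (intro conjI)
  show "{x. \<exists>c. (\<forall>i. c i \<ge> 0) \<and> x = (\<Sum>i<n. c i *\<^sub>R a i)} \<noteq> {}"
  proof -
    have "(\<Sum>i<n. (\<lambda>_. 0::real) i *\<^sub>R a i) \<in> {x. \<exists>c. (\<forall>i. c i \<ge> 0) \<and> x = (\<Sum>i<n. c i *\<^sub>R a i)}"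
      by (rule CollectI, rule exI[of _ "\<lambda>_. 0"]) simp
    then show ?thesis by blast
  qed
  show "convex {x. \<exists>c. (\<forall>i. c i \<ge> 0) \<and> x = (\<Sum>i<n. c i *\<^sub>R a i)}"
    unfolding convex_def
  proof (clarify)
    fix c c' :: "nat \<Rightarrow> real" and u v :: real
    assume h: "\<forall>i. 0 \<le> c i" "\<forall>i. 0 \<le> c' i" "0 \<le> u" "0 \<le> v" "u + v = 1"
    show "\<exists>e. (\<forall>i. 0 \<le> e i) \<and> u *\<^sub>R (\<Sum>i<n. c i *\<^sub>R a i) + v *\<^sub>R (\<Sum>i<n. c' i *\<^sub>R a i) = (\<Sum>i<n. e i *\<^sub>R a i)"
      using h
      by (intro exI[of _ "\<lambda>i. u * c i + v * c' i"])
         (simp add: scaleR_sum_right sum.distrib[symmetric] scaleR_add_left)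
  qed
  show "conic {x. \<exists>c. (\<forall>i. c i \<ge> 0) \<and> x = (\<Sum>i<n. c i *\<^sub>R a i)}"
    unfolding conic_def
  proof (clarify)
    fix c :: "nat \<Rightarrow> real" and u :: real
    assume h: "\<forall>i. 0 \<le> c i" "0 \<le> u"
    show "\<exists>e. (\<forall>i. 0 \<le> e i) \<and> u *\<^sub>R (\<Sum>i<n. c i *\<^sub>R a i) = (\<Sum>i<n. e i *\<^sub>R a i)"
      using h by (intro exI[of _ "\<lambda>i. u * c i"]) (auto simp: scaleR_sum_right)
  qed
qed

theorem mainTheorem3:
  fixes d k n :: nat
    and X :: "nat \<Rightarrow> nat \<Rightarrow> real^'m"
    and wstar r :: "real^'m"
  assumes "k \<ge> 1" and "k dvd d" and "CARD('m) = d div k"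
    and "\<forall>i<n. \<forall>j<k. X i j \<bullet> wstar \<noteq> 0"
  defines "y \<equiv> (\<lambda>i. \<Sum>j<k. pos_part (X i j \<bullet> wstar))"
    and "zstar \<equiv> (\<lambda>i j. pos_part (X i j \<bullet> wstar))"
    and "R \<equiv> (\<lambda>i. {j. j < k \<and> X i j \<bullet> wstar > 0})"
    and "S \<equiv> (\<lambda>j. {i. i < n \<and> X i j \<bullet> wstar > 0})"
  shows "(lp_optimal n k X y r wstar zstar \<longleftrightarrow>
            r \<in> nonneg_cone ((\<lambda>i. \<Sum>j\<in>R i. X i j) ` {..<n}))
       \<and> (lp_optimal n k X y r wstar zstar \<longleftrightarrow>
            (\<exists>v :: nat \<Rightarrow> real. (\<forall>j<k. \<forall>i\<in>S j. v i \<ge> 0) \<and>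
               (\<Sum>j<k. \<Sum>i\<in>S j. v i *\<^sub>R X i j) = r))"
proof -
  define a where "a = (\<lambda>i. \<Sum>j\<in>R i. X i j)"
  have Rf: "R i = {j\<in>{..<k}. X i j \<bullet> wstar > 0}" for i unfolding R_def by auto
  have sumpos: "(\<Sum>j<k. pos_part (X i j \<bullet> w)) = (\<Sum>j\<in>{j\<in>{..<k}. X i j \<bullet> w > 0}. X i j \<bullet> w)" for i w
    by (subst sum.inter_filter) (auto simp: pos_part_def intro!: sum.cong)
  have F0: "y i = a i \<bullet> wstar" for i
    unfolding y_def a_def sumpos Rf by (simp add: inner_sum_left)
  have feas0: "lp_feasible n k X y wstar zstar"
    unfolding lp_feasible_def zstar_def y_def by (auto simp: pos_part_def)
  have K: "a i \<bullet> w' \<le> a i \<bullet> wstar" if f: "lp_feasible n k X y w' z'" and i: "i < n" for i w' z'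
  proof -
    have "a i \<bullet> w' = (\<Sum>j\<in>R i. X i j \<bullet> w')" unfolding a_def by (simp add: inner_sum_left)
    also have "\<dots> \<le> (\<Sum>j\<in>R i. z' i j)"
      using f i by (intro sum_mono) (auto simp: lp_feasible_def R_def)
    also have "\<dots> \<le> (\<Sum>j<k. z' i j)"
      using f i by (intro sum_mono2) (auto simp: lp_feasible_def R_def)
    also have "\<dots> = y i" using f i by (auto simp: lp_feasible_def)
    finally show ?thesis using F0 by simp
  qed
  have swap: "(\<Sum>j<k. \<Sum>i\<in>S j. v i *\<^sub>R X i j) = (\<Sum>i<n. v i *\<^sub>R a i)" for v
  proof -
    have Sf: "S j = {i\<in>{..<n}. X i j \<bullet> wstar > 0}" for j unfolding S_def by auto
    have "(\<Sum>j<k. \<Sum>i\<in>S j. v i *\<^sub>R X i j) = (\<Sum>j<k. \<Sum>i<n. if X i j \<bullet> wstar > 0 then v i *\<^sub>R X i j else 0)"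
      unfolding Sf by (subst sum.inter_filter) auto
    also have "\<dots> = (\<Sum>i<n. \<Sum>j<k. if X i j \<bullet> wstar > 0 then v i *\<^sub>R X i j else 0)"
      by (rule sum.swap)
    also have "\<dots> = (\<Sum>i<n. v i *\<^sub>R a i)"
    proof (intro sum.cong refl)
      fix i
      have "(\<Sum>j<k. if X i j \<bullet> wstar > 0 then v i *\<^sub>R X i j else 0)
          = (\<Sum>j\<in>{j\<in>{..<k}. X i j \<bullet> wstar > 0}. v i *\<^sub>R X i j)"
        by (rule sum.inter_filter[symmetric]) simp
      also have "\<dots> = (\<Sum>j\<in>R i. v i *\<^sub>R X i j)" by (simp only: Rf)
      also have "\<dots> = v i *\<^sub>R a i" unfolding a_def by (rule scaleR_sum_right[symmetric])
      finally show "(\<Sum>j<k. if X i j \<bullet> wstar > 0 then v i *\<^sub>R X i j else 0) = v i *\<^sub>R a i" .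
    qed
    finally show ?thesis .
  qed
  have C1P: "lp_optimal n k X y r wstar zstar" if "r \<in> nonneg_cone (a ` {..<n})"
  proof -
    have "\<exists>F c. finite F \<and> F \<subseteq> a ` {..<n} \<and> (\<forall>v\<in>F. c v \<ge> 0) \<and> r = (\<Sum>v\<in>F. c v *\<^sub>R v)"
      using that unfolding nonneg_cone_def mem_Collect_eq .
    then obtain F c where "finite F \<and> F \<subseteq> a ` {..<n} \<and> (\<forall>v\<in>F. c v \<ge> 0) \<and> r = (\<Sum>v\<in>F. c v *\<^sub>R v)"
      by (elim exE)
    then have F: "finite F" "F \<subseteq> a ` {..<n}" "\<forall>v\<in>F. c v \<ge> 0" "r = (\<Sum>v\<in>F. c v *\<^sub>R v)" by auto
    show ?thesis unfolding lp_optimal_def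
    proof (intro conjI feas0 allI impI)
      fix w' z' assume f: "lp_feasible n k X y w' z'"
      have "r \<bullet> w' = (\<Sum>v\<in>F. c v * (v \<bullet> w'))" using F(4) by (simp add: inner_sum_left)
      also have "\<dots> \<le> (\<Sum>v\<in>F. c v * (v \<bullet> wstar))"
      proof (rule sum_mono)
        fix v assume "v \<in> F"
        then obtain i where "i < n" "v = a i" using F(2) by auto
        then show "c v * (v \<bullet> w') \<le> c v * (v \<bullet> wstar)"
          using K[OF f] F(3) \<open>v \<in> F\<close> by (simp add: mult_left_mono)
      qed
      also have "\<dots> = r \<bullet> wstar" using F(4) by (simp add: inner_sum_left)
      finally show "r \<bullet> w' \<le> r \<bullet> wstar" .
    qed
  qed
  have C2P: "lp_optimal n k X y r wstar zstar"
    if "(\<forall>j<k. \<forall>i\<in>S j. v i \<ge> 0) \<and> (\<Sum>j<k. \<Sum>i\<in>S j. v i *\<^sub>R X i j) = r" for v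
  proof -
    have r: "r = (\<Sum>i<n. v i *\<^sub>R a i)" using that swap by simp
    have a0: "a i = 0" if "R i = {}" for i unfolding a_def using that by simp
    have vpos: "v i \<ge> 0" if "i < n" "R i \<noteq> {}" for i
      using that \<open>(\<forall>j<k. \<forall>i\<in>S j. v i \<ge> 0) \<and> _\<close> unfolding R_def S_def by auto
    show ?thesis unfolding lp_optimal_def
    proof (intro conjI feas0 allI impI)
      fix w' z' assume f: "lp_feasible n k X y w' z'"
      have "r \<bullet> w' = (\<Sum>i<n. v i * (a i \<bullet> w'))" using r by (simp add: inner_sum_left)
      also have "\<dots> \<le> (\<Sum>i<n. v i * (a i \<bullet> wstar))"
      proof (rule sum_mono)
        fix i assume i: "i \<in> {..<n}"
        show "v i * (a i \<bullet> w') \<le> v i * (a i \<bullet> wstar)"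
        proof (cases "R i = {}")
          case True then show ?thesis using a0 by simp
        next
          case False then show ?thesis using vpos K[OF f] i by (simp add: mult_left_mono)
        qed
      qed
      also have "\<dots> = r \<bullet> wstar" using r by (simp add: inner_sum_left)
      finally show "r \<bullet> w' \<le> r \<bullet> wstar" .
    qed
  qed
  define T where "T = {x. \<exists>c. (\<forall>i. c i \<ge> 0) \<and> x = (\<Sum>i<n. c i *\<^sub>R a i)}"
  have L: "r \<in> T" if opt: "lp_optimal n k X y r wstar zstar"
  proof (rule ccontr)
    assume nT: "r \<notin> T"
    define H where "H = convex_cone hull (a ` {..<n})"
    have HT: "H \<subseteq> T" unfolding H_def T_def
    proof (rule hull_minimal)
      show "a ` {..<n} \<subseteq> {x. \<exists>c. (\<forall>i. c i \<ge> 0) \<and> x = (\<Sum>i<n. c i *\<^sub>R a i)}"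
      proof clarify
        fix i assume "i < n"
        show "\<exists>c. (\<forall>i. c i \<ge> 0) \<and> a i = (\<Sum>i<n. c i *\<^sub>R a i)"
          using \<open>i < n\<close> by (intro exI[of _ "\<lambda>l. if l = i then 1 else 0"])
             (simp add: if_distrib[of "\<lambda>c. c *\<^sub>R _"] sum.delta' cong: if_cong)
      qed
    qed (rule convex_cone_T)
    have rH: "r \<notin> H" using nT HT by auto
    have cH: "convex H" "closed H" unfolding H_def
      by (simp_all add: convex_convex_cone_hull closed_convex_cone_hull)
    obtain u b where ub: "u \<bullet> r < b" "\<forall>x\<in>H. u \<bullet> x > b"
      using separating_hyperplane_closed_point[OF cH rH] by blast
    have "0 \<in> H" unfolding H_def by (rule convex_cone_hull_contains_0)
    then have b0: "b < 0" using ub by auto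
    have ua: "u \<bullet> a i \<ge> 0" if "i < n" for i
    proof (rule ccontr)
      assume neg: "\<not> u \<bullet> a i \<ge> 0"
      have "a i \<in> H" unfolding H_def using that by (auto intro: hull_inc)
      then have "(b / (u \<bullet> a i)) *\<^sub>R a i \<in> H" unfolding H_def
        using neg b0 by (intro convex_cone_hull_mul) (auto simp: divide_nonpos_neg)
      then have gt: "u \<bullet> ((b / (u \<bullet> a i)) *\<^sub>R a i) > b" using ub by blast
      have "u \<bullet> ((b / (u \<bullet> a i)) *\<^sub>R a i) = b" using neg by simp
      then show False using gt by simp
    qed
    define g where "g = - u"
    have gr: "g \<bullet> r > 0" unfolding g_def using ub b0 by simp
    have ga: "g \<bullet> a i \<le> 0" if "i < n" for i unfolding g_def using ua[OF that] by simp
    obtain t where t: "t > 0" "\<forall>x\<in>{..<n}\<times>{..<k}. ((\<lambda>(i,j). X i j \<bullet> wstar) x + t * (\<lambda>(i,j). X i j \<bullet> g) x > 0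
        \<longleftrightarrow> (\<lambda>(i,j). X i j \<bullet> wstar) x > 0)"
      using perturb_exists[of "{..<n}\<times>{..<k}" "\<lambda>(i,j). X i j \<bullet> wstar" "\<lambda>(i,j). X i j \<bullet> g"] assms(4)
      by auto
    define w where "w = wstar + t *\<^sub>R g"
    have Xw: "X i j \<bullet> w = X i j \<bullet> wstar + t * (X i j \<bullet> g)" for i j
      unfolding w_def by (simp add: inner_add_right)
    have sgn: "X i j \<bullet> w > 0 \<longleftrightarrow> X i j \<bullet> wstar > 0" if "i < n" "j < k" for i j
      using t(2) that unfolding Xw by auto
    have sw: "(\<Sum>j<k. pos_part (X i j \<bullet> w)) \<le> y i" if i: "i < n" for i
    proof -
      have "{j\<in>{..<k}. X i j \<bullet> w > 0} = R i" unfolding Rf using sgn i by auto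
      then have "(\<Sum>j<k. pos_part (X i j \<bullet> w)) = a i \<bullet> w"
        unfolding sumpos a_def by (simp add: inner_sum_left)
      also have "\<dots> = a i \<bullet> wstar + t * (g \<bullet> a i)" unfolding w_def
        by (simp add: inner_add_right inner_commute)
      also have "\<dots> \<le> a i \<bullet> wstar" using ga[OF i] t(1) by (simp add: mult_nonneg_nonpos)
      finally show ?thesis using F0 by simp
    qed
    define z where "z = (\<lambda>i j. pos_part (X i j \<bullet> w) + (if j = 0 then y i - (\<Sum>j<k. pos_part (X i j \<bullet> w)) else 0))"
    have fz: "lp_feasible n k X y w z"
      unfolding lp_feasible_def
    proof (intro conjI allI impI)
      fix i j assume i: "i < n" and "j < k"
      have "0 \<le> (if j = 0 then y i - (\<Sum>j<k. pos_part (X i j \<bullet> w)) else 0)" using sw[OF i] by auto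
      then show "0 \<le> z i j" "X i j \<bullet> w \<le> z i j" unfolding z_def by (auto simp: pos_part_def)
    next
      fix i assume i: "i < n"
      have "0 \<in> {..<k}" using assms(1) by auto
      then show "(\<Sum>j<k. z i j) = y i" unfolding z_def
        by (simp add: sum.distrib sum.delta)
    qed
    have "r \<bullet> w \<le> r \<bullet> wstar" using opt fz unfolding lp_optimal_def by blast
    moreover have "r \<bullet> w = r \<bullet> wstar + t * (g \<bullet> r)" unfolding w_def
      by (simp add: inner_add_right inner_commute)
    moreover have "t * (g \<bullet> r) > 0" using gr t(1) by simp
    ultimately show False by linarith
  qed
  have P1: "lp_optimal n k X y r wstar zstar \<longleftrightarrow> r \<in> nonneg_cone (a ` {..<n})"
  proof
    assume "lp_optimal n k X y r wstar zstar"
    then have "\<exists>c. (\<forall>i. c i \<ge> 0) \<and> r = (\<Sum>i<n. c i *\<^sub>R a i)" using L unfolding T_def mem_Collect_eq by blast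
    then obtain c where "(\<forall>i. c i \<ge> 0) \<and> r = (\<Sum>i<n. c i *\<^sub>R a i)" by (elim exE)
    then show "r \<in> nonneg_cone (a ` {..<n})" using indexed_in_cone by auto
  qed (rule C1P)
  have P2: "lp_optimal n k X y r wstar zstar \<longleftrightarrow>
            (\<exists>v :: nat \<Rightarrow> real. (\<forall>j<k. \<forall>i\<in>S j. v i \<ge> 0) \<and>
               (\<Sum>j<k. \<Sum>i\<in>S j. v i *\<^sub>R X i j) = r)"
  proof
    assume "lp_optimal n k X y r wstar zstar"
    then have "\<exists>c. (\<forall>i. c i \<ge> 0) \<and> r = (\<Sum>i<n. c i *\<^sub>R a i)" using L unfolding T_def mem_Collect_eq by blast
    then obtain c where "(\<forall>i. c i \<ge> 0) \<and> r = (\<Sum>i<n. c i *\<^sub>R a i)" by (elim exE)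
    then show "\<exists>v :: nat \<Rightarrow> real. (\<forall>j<k. \<forall>i\<in>S j. v i \<ge> 0) \<and> (\<Sum>j<k. \<Sum>i\<in>S j. v i *\<^sub>R X i j) = r"
      using swap by (intro exI[of _ c]) simp
  qed (use C2P in blast)
  show ?thesis using P1 P2 unfolding a_def by simp
qed

end
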